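(* For every non-crossing pair partition $\pi$, $a_\pi\Lambda=P_\pi(1)\Lambda$, and for every $n\ge1$, $g\in\mathcal D_n$ and $\vec x=(x_1,\dots,x_n)$, $$(a_\pi g)(\vec x)=\big[P_\pi(x_1)\mathbb 1_{n,1}(\vec x)+Q_\pi(x_1)\mathbb 1'_n(\vec x)\big]g(\vec x),$$ where $\mathbb 1'_n=\mathbb 1_n-\mathbb 1_{n,1}$.
   Context: $\mathcal X_{n,m}=\{(x_1,\dots,x_n):x_1>\dots>x_m<\dots<x_n\}$, $\mathcal X_n=\bigcup_m\mathcal X_{n,m}$, $\mathbb 1_n,\mathbb 1_{n,m}$ their indicators. $\mathcal{CV}=\mathbb{C}\Lambda\oplus\bigoplus_{n\ge1}L^2(\mathcal X_n)$; $a\Lambda=\mathbb 1_{[0,1]}$, $(ag)(x,\vec x)=\mathbb 1_{[0,1]}(x)\mathbb 1_{n+1}(x,\vec x)g(\vec x)$; $a^*\Lambda=0$, $a^*g=(\int_0^1g)\Lambda$ on $L^2(\mathcal X_1)$, $(a^*g)(\vec x)=\mathbb 1_{n,1}(\vec x)\int_0^{x_1}g(x,\vec x)dx+\int_{x_1}^1g(x,\vec x)dx$ on $L^2(\mathcal X_{n+1})$. $\mathcal D_n$: functions in $L^2(\mathcal X_n)$ vanishing outside $[0,1]^n$ and polynomial on each $\mathcal X_{n,m}\cap[0,1]^n$. Each nonempty non-crossing pair partition decomposes uniquely as $\pi=\{\{1,2m+2\}\}\cup(\pi'+1)\cup(\pi''+2m+2)$ with $\pi',\pi''$ non-crossing pair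 partitions of $[2m]$ and of the remaining points (shifts applied to all legs). Define $a_\emptyset=\mathrm{id}$, $a_\pi=a^*a_{\pi'}a\,a_{\pi''}$; polynomials on $[0,1]$: $P_\emptyset=Q_\emptyset=1$, $P_\pi(x)=\big[\int_0^xP_{\pi'}(t)dt+\int_x^1Q_{\pi'}(t)dt\big]P_{\pi''}(x)$, $Q_\pi(x)=\big[\int_x^1Q_{\pi'}(t)dt\big]Q_{\pi''}(x)$. *)

theory Defs
  imports "HOL-Analysis.Analysis"
begin

text \<open>Points of R^n are real lists of length n; x_1 is the head.
  The space CV = C Lambda + (sum over n >= 1 of L2(X_n)) is encoded as functions on real lists:
  the value at the empty list is the Lambda-coefficient, and the restriction to lists of length n
  is the component in L2(X_n) (a representative vanishing outside X_n).\<close>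

type_synonym cv = "real list \<Rightarrow> complex"

definition ind :: "bool \<Rightarrow> complex" where
  "ind b = (if b then 1 else 0)"

text \<open>X_{n,m}: x_1 > ... > x_m < ... < x_n (list indices shifted by one).\<close>
definition inXm :: "nat \<Rightarrow> nat \<Rightarrow> real list \<Rightarrow> bool" where
  "inXm n m xs \<longleftrightarrow> length xs = n \<and> 1 \<le> m \<and> m \<le> n \<and>
     (\<forall>i. i + 1 < m \<longrightarrow> xs ! i > xs ! (i + 1)) \<and>
     (\<forall>i. m \<le> i + 1 \<and> i + 1 < n \<longrightarrow> xs ! i < xs ! (i + 1))"

definition inX :: "nat \<Rightarrow> real list \<Rightarrow> bool" where
  "inX n xs \<longleftrightarrow> (\<exists>m. inXm n m xs)"

definition oint :: "real \<Rightarrow> real \<Rightarrow> (real \<Rightarrow> 'b::{banach,second_countable_topology}) \<Rightarrow> 'b" where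
  "oint a b f = interval_lebesgue_integral lborel (ereal a) (ereal b) f"

definition Lam :: cv where
  "Lam = (\<lambda>xs. if xs = [] then 1 else 0)"

fun cre :: "cv \<Rightarrow> cv" where
  "cre f [] = 0"
| "cre f (x # xs) = ind (0 \<le> x \<and> x \<le> 1) * ind (inX (Suc (length xs)) (x # xs)) * f xs"

fun ann :: "cv \<Rightarrow> cv" where
  "ann f [] = oint 0 1 (\<lambda>x. f [x])"
| "ann f (y # ys) =
     ind (inXm (Suc (length ys)) 1 (y # ys)) * oint 0 y (\<lambda>x. f (x # y # ys))
     + oint y 1 (\<lambda>x. f (x # y # ys))"

text \<open>Non-crossing pair partitions, represented through their unique decomposition
  pi = {{1,2m+2}} u (pi'+1) u (pi''+2m+2): NCEmpty is the empty partition,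
  NCSplit pi' pi'' the decomposed one.\<close>
datatype ncpp = NCEmpty | NCSplit ncpp ncpp

fun ncpp_size :: "ncpp \<Rightarrow> nat" where
  "ncpp_size NCEmpty = 0"
| "ncpp_size (NCSplit p q) = Suc (ncpp_size p + ncpp_size q)"

fun blocks :: "ncpp \<Rightarrow> nat set set" where
  "blocks NCEmpty = {}"
| "blocks (NCSplit p q) =
     {{1, 2 * ncpp_size p + 2}} \<union> ((\<lambda>B. (\<lambda>i. i + 1) ` B) ` blocks p)
     \<union> ((\<lambda>B. (\<lambda>i. i + (2 * ncpp_size p + 2)) ` B) ` blocks q)"

fun a_pi :: "ncpp \<Rightarrow> cv \<Rightarrow> cv" where
  "a_pi NCEmpty f = f"
| "a_pi (NCSplit p q) f = ann (a_pi p (cre (a_pi q f)))"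

fun Q_pi :: "ncpp \<Rightarrow> real \<Rightarrow> real" where
  "Q_pi NCEmpty x = 1"
| "Q_pi (NCSplit p q) x = oint x 1 (Q_pi p) * Q_pi q x"

fun P_pi :: "ncpp \<Rightarrow> real \<Rightarrow> real" where
  "P_pi NCEmpty x = 1"
| "P_pi (NCSplit p q) x = (oint 0 x (P_pi p) + oint x 1 (Q_pi p)) * P_pi q x"

inductive mpoly_fun :: "nat \<Rightarrow> (real list \<Rightarrow> complex) \<Rightarrow> bool" for n where
  const: "mpoly_fun n (\<lambda>_. c)"
| coord: "i < n \<Longrightarrow> mpoly_fun n (\<lambda>xs. complex_of_real (xs ! i))"
| add: "mpoly_fun n p \<Longrightarrow> mpoly_fun n q \<Longrightarrow> mpoly_fun n (\<lambda>xs. p xs + q xs)"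
| mult: "mpoly_fun n p \<Longrightarrow> mpoly_fun n q \<Longrightarrow> mpoly_fun n (\<lambda>xs. p xs * q xs)"

definition Dn :: "nat \<Rightarrow> cv set" where
  "Dn n = {g. (\<forall>xs. g xs \<noteq> 0 \<longrightarrow> length xs = n \<and> inX n xs \<and> (\<forall>x\<in>set xs. 0 \<le> x \<and> x \<le> 1)) \<and>
              (\<forall>m\<in>{1..n}. \<exists>p. mpoly_fun n p \<and>
                 (\<forall>xs. inXm n m xs \<and> (\<forall>x\<in>set xs. 0 \<le> x \<and> x \<le> 1) \<longrightarrow> g xs = p xs))}"

end

theory Submission imports Defs "HOL-Computational_Algebra.Polynomial" begin

definition antid :: "real poly \<Rightarrow> real poly" where
  "antid P = (\<Sum>i\<le>degree P. monom (coeff P i / of_nat (Suc i)) (Suc i))"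

lemma pderiv_antid: "pderiv (antid P) = P"
proof -
  have "pderiv (antid P) = (\<Sum>i\<le>degree P. pderiv (monom (coeff P i / of_nat (Suc i)) (Suc i)))"
    unfolding antid_def using higher_pderiv_sum[of 1] by simp
  also have "\<dots> = (\<Sum>i\<le>degree P. monom (coeff P i) i)"
    by (intro sum.cong refl) (simp add: pderiv_monom del: of_nat_Suc)
  also have "\<dots> = P" by (rule poly_as_sum_of_monoms)
  finally show ?thesis .
qed

lemma oint_poly: "oint a b (poly P) = poly (antid P) b - poly (antid P) a"
  unfolding oint_def
  apply (rule interval_integral_FTC_finite)
   apply (intro continuous_intros)
  apply (subst has_real_derivative_iff_has_vector_derivative[symmetric])
  apply (rule DERIV_subset[OF _ subset_UNIV])
  using poly_DERIV[of "antid P"] by (simp add: pderiv_antid)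

lemma oint_poly_c: "oint a b (\<lambda>x. complex_of_real (poly P x) * c) =
   complex_of_real (poly (antid P) b - poly (antid P) a) * c"
proof -
  have "oint a b (\<lambda>x. complex_of_real (poly P x) * c) =
     complex_of_real (poly (antid P) b) * c - complex_of_real (poly (antid P) a) * c"
  unfolding oint_def
  apply (rule interval_integral_FTC_finite)
   apply (intro continuous_intros)
  apply (rule has_vector_derivative_mult_left)
  apply (rule has_vector_derivative_of_real)
  apply (rule DERIV_subset[OF _ subset_UNIV])
  using poly_DERIV[of "antid P"] by (simp add: pderiv_antid)
  then show ?thesis by (simp add: algebra_simps)
qed

lemma oint_cong: "a \<le> b \<Longrightarrow> (\<And>x. a < x \<Longrightarrow> x < b \<Longrightarrow> f x = g x) \<Longrightarrow> oint a b f = oint a b g"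
  unfolding oint_def by (rule interval_integral_cong) (auto simp: einterval_def min_def max_def)

lemma oint_zero: "oint a b (\<lambda>x. 0::complex) = 0"
  unfolding oint_def by simp

lemma PQ_poly: "\<exists>A B. P_pi t = poly A \<and> Q_pi t = poly B"
proof (induction t)
  case NCEmpty
  then show ?case by (intro exI[of _ 1]) (auto simp: fun_eq_iff)
next
  case (NCSplit p q)
  then obtain A B A' B' where h: "P_pi p = poly A" "Q_pi p = poly B" "P_pi q = poly A'" "Q_pi q = poly B'"
    by blast
  show ?case
    apply (rule exI[of _ "([:poly (antid B) 1 - poly (antid A) 0:] + antid A - antid B) * A'"])
    apply (rule exI[of _ "([:poly (antid B) 1:] - antid B) * B'"])
    by (auto simp: fun_eq_iff h oint_poly)
qed


lemma inXm_tl: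
  assumes "inXm (Suc n) m (x#xs)" "1 \<le> n"
  shows "inXm n (max (m-1) 1) xs"
proof -
  have L: "length xs = n" "1 \<le> m" "m \<le> Suc n"
    and D: "\<And>i. i + 1 < m \<Longrightarrow> (x#xs) ! i > (x#xs) ! (i + 1)"
    and I: "\<And>i. m \<le> i + 1 \<Longrightarrow> i + 1 < Suc n \<Longrightarrow> (x#xs) ! i < (x#xs) ! (i + 1)"
    using assms unfolding inXm_def by auto
  show ?thesis unfolding inXm_def
  proof (intro conjI allI impI)
    fix i assume "i + 1 < max (m - 1) 1"
    then show "xs ! i > xs ! (i+1)" using D[of "Suc i"] by auto
  next
    fix i assume "max (m - 1) 1 \<le> i + 1 \<and> i + 1 < n"
    then show "xs ! i < xs ! (i+1)" using I[of "Suc i"] by auto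
  qed (use L assms(2) in auto)
qed

lemma inX_tl: "inX (Suc n) (x#xs) \<Longrightarrow> 1 \<le> n \<Longrightarrow> inX n xs"
  unfolding inX_def using inXm_tl by blast

lemma inXm_ext1:
  assumes "inXm n 1 (y#ys)" "x < y"
  shows "inXm (Suc n) 1 (x#y#ys)"
proof -
  have L: "length (y#ys) = n"
    and I: "\<And>i. 1 \<le> i + 1 \<Longrightarrow> i + 1 < n \<Longrightarrow> (y#ys) ! i < (y#ys) ! (i + 1)"
    using assms unfolding inXm_def by auto
  show ?thesis unfolding inXm_def
  proof (intro conjI allI impI)
    fix i assume "1 \<le> i + 1 \<and> i + 1 < Suc n"
    then show "(x#y#ys) ! i < (x#y#ys) ! (i+1)" using I[of "i - 1"] assms(2)
      by (cases i) auto
  qed (use L in auto)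
qed

lemma inXm_extm:
  assumes "inXm n m (y#ys)" "y < x"
  shows "inXm (Suc n) (Suc m) (x#y#ys)"
proof -
  have L: "length (y#ys) = n" "1 \<le> m" "m \<le> n"
    and D: "\<And>i. i + 1 < m \<Longrightarrow> (y#ys) ! i > (y#ys) ! (i + 1)"
    and I: "\<And>i. m \<le> i + 1 \<Longrightarrow> i + 1 < n \<Longrightarrow> (y#ys) ! i < (y#ys) ! (i + 1)"
    using assms unfolding inXm_def by auto
  show ?thesis unfolding inXm_def
  proof (intro conjI allI impI)
    fix i assume "i + 1 < Suc m"
    then show "(x#y#ys) ! i > (x#y#ys) ! (i+1)" using D[of "i - 1"] assms(2)
      by (cases i) auto
  next
    fix i assume "Suc m \<le> i + 1 \<and> i + 1 < Suc n"
    then show "(x#y#ys) ! i < (x#y#ys) ! (i+1)" using I[of "i - 1"] L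
      by (cases i) auto
  qed (use L in auto)
qed

lemma not_inXm1: "y < x \<Longrightarrow> \<not> inXm k 1 (x#y#ys)"
proof
  assume a: "y < x" "inXm k 1 (x#y#ys)"
  then have "k = length (x#y#ys)" "\<forall>i. 1 \<le> i + 1 \<and> i + 1 < k \<longrightarrow> (x#y#ys) ! i < (x#y#ys) ! (i + 1)"
    unfolding inXm_def by auto
  then have "x < y" by (metis add_0 le_refl length_Cons less_Suc_eq_0_disj nat.simps(3) nth_Cons_0 nth_Cons_Suc One_nat_def)
  with a show False by simp
qed

lemma inXm1_unique: "inXm n 1 xs \<Longrightarrow> inXm n m xs \<Longrightarrow> m = 1"
proof (rule ccontr)
  assume a: "inXm n 1 xs" "inXm n m xs" "m \<noteq> 1"
  then have m: "2 \<le> m" "m \<le> n" unfolding inXm_def by auto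
  have "xs ! 0 > xs ! 1" using a(2) m unfolding inXm_def by auto
  moreover have "xs ! 0 < xs ! 1" using a(1) m unfolding inXm_def by auto
  ultimately show False by simp
qed

lemma inXm_inX: "inXm n m xs \<Longrightarrow> inX n xs"
  unfolding inX_def by blast

lemma inX_single: "inXm 1 1 [x]" "inX 1 [x]"
  unfolding inX_def inXm_def by auto

lemma mpoly_tl: "mpoly_fun n p \<Longrightarrow> \<exists>p'. mpoly_fun (Suc n) p' \<and> (\<forall>x xs. p' (x#xs) = p xs)"
proof (induction rule: mpoly_fun.induct)
  case (const c)
  then show ?case by (intro exI[of _ "\<lambda>_. c"]) (auto intro: mpoly_fun.const)
next
  case (coord i)
  then show ?case by (intro exI[of _ "\<lambda>xs. complex_of_real (xs ! Suc i)"]) (auto intro: mpoly_fun.coord)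
next
  case (add p q)
  then obtain p' q' where "mpoly_fun (Suc n) p'" "\<forall>x xs. p' (x#xs) = p xs"
     "mpoly_fun (Suc n) q'" "\<forall>x xs. q' (x#xs) = q xs" by blast
  then show ?case by (intro exI[of _ "\<lambda>xs. p' xs + q' xs"]) (auto intro: mpoly_fun.add)
next
  case (mult p q)
  then obtain p' q' where "mpoly_fun (Suc n) p'" "\<forall>x xs. p' (x#xs) = p xs"
     "mpoly_fun (Suc n) q'" "\<forall>x xs. q' (x#xs) = q xs" by blast
  then show ?case by (intro exI[of _ "\<lambda>xs. p' xs * q' xs"]) (auto intro: mpoly_fun.mult)
qed

lemma mpoly_hd: "0 < n \<Longrightarrow> \<exists>p'. mpoly_fun n p' \<and> (\<forall>x xs. p' (x#xs) = complex_of_real (poly P x))"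
proof (induction P)
  case 0
  then show ?case by (intro exI[of _ "\<lambda>_. 0"]) (auto intro: mpoly_fun.const)
next
  case (pCons a P)
  then obtain p' where "mpoly_fun n p'" "\<forall>x xs. p' (x#xs) = complex_of_real (poly P x)" by blast
  then show ?case
    by (intro exI[of _ "\<lambda>xs. complex_of_real a + complex_of_real (xs ! 0) * p' xs"])
       (auto intro!: mpoly_fun.add mpoly_fun.mult mpoly_fun.const mpoly_fun.coord pCons.prems)
qed

lemma D1:
  assumes g: "g \<in> Dn n" and n: "1 \<le> n"
    and hn: "\<And>xs. length xs = n \<Longrightarrow> h xs = (complex_of_real (poly A (hd xs)) * ind (inXm n 1 xs)
               + complex_of_real (poly B (hd xs)) * (ind (inX n xs) - ind (inXm n 1 xs))) * g xs"
    and h0: "\<And>xs. length xs \<noteq> n \<Longrightarrow> h xs = 0"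
  shows "h \<in> Dn n"
proof -
  have g1: "\<And>xs. g xs \<noteq> 0 \<Longrightarrow> length xs = n \<and> inX n xs \<and> (\<forall>x\<in>set xs. 0 \<le> x \<and> x \<le> 1)"
    and g2: "\<And>m. m \<in> {1..n} \<Longrightarrow> \<exists>p. mpoly_fun n p \<and>
                 (\<forall>xs. inXm n m xs \<and> (\<forall>x\<in>set xs. 0 \<le> x \<and> x \<le> 1) \<longrightarrow> g xs = p xs)"
    using g unfolding Dn_def by auto
  show ?thesis unfolding Dn_def
  proof (rule CollectI, rule conjI; (intro allI impI ballI)?)
    fix xs assume "h xs \<noteq> 0"
    then have l: "length xs = n" using h0 by metis
    then have "g xs \<noteq> 0" using hn \<open>h xs \<noteq> 0\<close> by (metis mult_zero_right)
    note l this
    then show "length xs = n \<and> inX n xs \<and> (\<forall>x\<in>set xs. 0 \<le> x \<and> x \<le> 1)" using g1 by blast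
  next
    fix m assume m: "m \<in> {1..n}"
    obtain p where p: "mpoly_fun n p" "\<forall>xs. inXm n m xs \<and> (\<forall>x\<in>set xs. 0 \<le> x \<and> x \<le> 1) \<longrightarrow> g xs = p xs"
      using g2[OF m] by blast
    obtain pa where pa: "mpoly_fun n pa" "\<forall>x xs. pa (x#xs) = complex_of_real (poly A x)"
      using mpoly_hd[of n A] n by auto
    obtain pb where pb: "mpoly_fun n pb" "\<forall>x xs. pb (x#xs) = complex_of_real (poly B x)"
      using mpoly_hd[of n B] n by auto
    show "\<exists>p. mpoly_fun n p \<and> (\<forall>xs. inXm n m xs \<and> (\<forall>x\<in>set xs. 0 \<le> x \<and> x \<le> 1) \<longrightarrow> h xs = p xs)"
    proof (cases "m = 1")
      case True
      show ?thesis
      proof (intro exI[of _ "\<lambda>xs. pa xs * p xs"] conjI allI impI)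
        show "mpoly_fun n (\<lambda>xs. pa xs * p xs)" using pa p by (auto intro: mpoly_fun.mult)
        fix xs assume xs: "inXm n m xs \<and> (\<forall>x\<in>set xs. 0 \<le> x \<and> x \<le> 1)"
        then have l: "length xs = n" unfolding inXm_def by auto
        then obtain y ys where "xs = y # ys" using n by (cases xs) auto
        then show "h xs = pa xs * p xs" using hn[OF l] xs p pa True inXm_inX[of n 1 xs]
          by (auto simp: ind_def)
      qed
    next
      case False
      show ?thesis
      proof (intro exI[of _ "\<lambda>xs. pb xs * p xs"] conjI allI impI)
        show "mpoly_fun n (\<lambda>xs. pb xs * p xs)" using pb p by (auto intro: mpoly_fun.mult)
        fix xs assume xs: "inXm n m xs \<and> (\<forall>x\<in>set xs. 0 \<le> x \<and> x \<le> 1)"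
        then have l: "length xs = n" unfolding inXm_def by auto
        then obtain y ys where "xs = y # ys" using n by (cases xs) auto
        moreover have "\<not> inXm n 1 xs" using inXm1_unique xs False by blast
        ultimately show "h xs = pb xs * p xs" using hn[OF l] xs p pb inXm_inX[of n m xs]
          by (auto simp: ind_def)
      qed
    qed
  qed
qed

lemma D2:
  assumes h: "h \<in> Dn n" and n: "1 \<le> n"
  shows "cre h \<in> Dn (Suc n)"
proof -
  have g1: "\<And>xs. h xs \<noteq> 0 \<Longrightarrow> length xs = n \<and> inX n xs \<and> (\<forall>x\<in>set xs. 0 \<le> x \<and> x \<le> 1)"
    and g2: "\<And>m. m \<in> {1..n} \<Longrightarrow> \<exists>p. mpoly_fun n p \<and>
                 (\<forall>xs. inXm n m xs \<and> (\<forall>x\<in>set xs. 0 \<le> x \<and> x \<le> 1) \<longrightarrow> h xs = p xs)"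
    using h unfolding Dn_def by auto
  show ?thesis unfolding Dn_def
  proof (rule CollectI, rule conjI; (intro allI impI ballI)?)
    fix xs assume nz: "cre h xs \<noteq> 0"
    then obtain x ys where xs: "xs = x # ys" by (cases xs) auto
    from nz xs have "0 \<le> x \<and> x \<le> 1" "inX (Suc (length ys)) (x#ys)" "h ys \<noteq> 0"
      by (auto simp: ind_def split: if_splits)
    with g1 xs show "length xs = Suc n \<and> inX (Suc n) xs \<and> (\<forall>x\<in>set xs. 0 \<le> x \<and> x \<le> 1)"
      by auto
  next
    fix m assume m: "m \<in> {1..Suc n}"
    then have m': "max (m-1) 1 \<in> {1..n}" using n by auto
    obtain p where p: "mpoly_fun n p" "\<forall>xs. inXm n (max (m-1) 1) xs \<and> (\<forall>x\<in>set xs. 0 \<le> x \<and> x \<le> 1) \<longrightarrow> h xs = p xs"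
      using g2[OF m'] by blast
    obtain p' where p': "mpoly_fun (Suc n) p'" "\<forall>x xs. p' (x#xs) = p xs"
      using mpoly_tl[OF p(1)] by blast
    show "\<exists>p. mpoly_fun (Suc n) p \<and> (\<forall>xs. inXm (Suc n) m xs \<and> (\<forall>x\<in>set xs. 0 \<le> x \<and> x \<le> 1) \<longrightarrow> cre h xs = p xs)"
    proof (intro exI[of _ p'] conjI allI impI)
      show "mpoly_fun (Suc n) p'" by (rule p')
      fix xs assume xs: "inXm (Suc n) m xs \<and> (\<forall>x\<in>set xs. 0 \<le> x \<and> x \<le> 1)"
      then obtain x ys where e: "xs = x # ys" unfolding inXm_def by (cases xs) auto
      have l: "length ys = n" using xs e unfolding inXm_def by auto
      have "inXm n (max (m-1) 1) ys" using inXm_tl xs e n by blast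
      then show "cre h xs = p' xs" using xs e l p p' inXm_inX[of "Suc n" m xs]
        by (auto simp: ind_def)
    qed
  qed
qed

lemma D3: "cre (\<lambda>xs. c * Lam xs) \<in> Dn 1"
  unfolding Dn_def
proof (rule CollectI, rule conjI; (intro allI impI ballI)?)
  fix xs assume nz: "cre (\<lambda>xs. c * Lam xs) xs \<noteq> 0"
  then obtain x ys where xs: "xs = x # ys" by (cases xs) auto
  from nz xs show "length xs = 1 \<and> inX 1 xs \<and> (\<forall>x\<in>set xs. 0 \<le> x \<and> x \<le> 1)"
    by (auto simp: ind_def Lam_def split: if_splits)
next
  fix m :: nat assume m: "m \<in> {1..1}"
  show "\<exists>p. mpoly_fun 1 p \<and> (\<forall>xs. inXm 1 m xs \<and> (\<forall>x\<in>set xs. 0 \<le> x \<and> x \<le> 1) \<longrightarrow>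
        cre (\<lambda>xs. c * Lam xs) xs = p xs)"
  proof (intro exI[of _ "\<lambda>_. c"] conjI allI impI)
    show "mpoly_fun 1 (\<lambda>_. c)" by (rule mpoly_fun.const)
    fix xs assume xs: "inXm 1 m xs \<and> (\<forall>x\<in>set xs. 0 \<le> x \<and> x \<le> 1)"
    then obtain x where e: "xs = [x]" unfolding inXm_def by (cases xs) auto
    show "cre (\<lambda>xs. c * Lam xs) xs = c" using xs e inX_single by (auto simp: ind_def Lam_def)
  qed
qed


theorem mainTheorem18:
  fixes pi :: ncpp
  shows "a_pi pi Lam = (\<lambda>xs. complex_of_real (P_pi pi 1) * Lam xs)
    \<and> (\<forall>n g. 1 \<le> n \<longrightarrow> g \<in> Dn n \<longrightarrow>
         (\<forall>xs. length xs = n \<longrightarrow>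
            a_pi pi g xs =
              (complex_of_real (P_pi pi (hd xs)) * ind (inXm n 1 xs)
               + complex_of_real (Q_pi pi (hd xs)) * (ind (inX n xs) - ind (inXm n 1 xs))) * g xs)
       \<and> (\<forall>xs. length xs \<noteq> n \<longrightarrow> a_pi pi g xs = 0))"
proof (induction pi)
  case NCEmpty
  show ?case
  proof (intro conjI allI impI)
    show "a_pi NCEmpty Lam = (\<lambda>xs. complex_of_real (P_pi NCEmpty 1) * Lam xs)" by simp
  next
    fix n g and xs :: "real list" assume n: "1 \<le> n" and g: "g \<in> Dn n" and l: "length xs = n"
    have "g xs \<noteq> 0 \<Longrightarrow> inX n xs" using g unfolding Dn_def by auto
    then show "a_pi NCEmpty g xs =
              (complex_of_real (P_pi NCEmpty (hd xs)) * ind (inXm n 1 xs)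
               + complex_of_real (Q_pi NCEmpty (hd xs)) * (ind (inX n xs) - ind (inXm n 1 xs))) * g xs"
      by (cases "g xs = 0") (auto simp: ind_def)
  next
    fix n g and xs :: "real list" assume n: "1 \<le> n" and g: "g \<in> Dn n" and l: "length xs \<noteq> n"
    then show "a_pi NCEmpty g xs = 0" unfolding Dn_def by auto
  qed
next
  case (NCSplit p q)
  note IHp = NCSplit.IH(1) and IHq = NCSplit.IH(2)
  obtain A B where AB: "P_pi p = poly A" "Q_pi p = poly B" using PQ_poly by blast
  obtain A' B' where AB': "P_pi q = poly A'" "Q_pi q = poly B'" using PQ_poly by blast
  show ?case
  proof (rule conjI)
    define G where "G = cre (a_pi q Lam)"
    have G1: "G \<in> Dn 1" unfolding G_def using IHq D3 by simp
    have GF: "a_pi p G [x] = complex_of_real (poly A x) * G [x]" for x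
      using IHp G1 inX_single[of x] by (auto simp: ind_def AB)
    have GF0: "length xs \<noteq> 1 \<Longrightarrow> a_pi p G xs = 0" for xs using IHp G1 by auto
    have Gx: "G [x] = (if 0 \<le> x \<and> x \<le> 1 then complex_of_real (P_pi q 1) else 0)" for x
      unfolding G_def using IHq inX_single[of x] by (auto simp: ind_def Lam_def)
    show "a_pi (NCSplit p q) Lam = (\<lambda>xs. complex_of_real (P_pi (NCSplit p q) 1) * Lam xs)"
    proof
      fix xs show "a_pi (NCSplit p q) Lam xs = complex_of_real (P_pi (NCSplit p q) 1) * Lam xs"
      proof (cases xs)
        case Nil
        have "oint 0 1 (\<lambda>x. a_pi p G [x]) = oint 0 1 (\<lambda>x. complex_of_real (poly A x) * complex_of_real (P_pi q 1))"
          by (rule oint_cong) (auto simp: GF Gx)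
        moreover have "a_pi (NCSplit p q) Lam [] = oint 0 1 (\<lambda>x. a_pi p G [x])" by (simp add: G_def)
        ultimately show ?thesis using Nil by (simp add: oint_poly_c oint_poly AB Lam_def)
      next
        case (Cons y ys)
        have "a_pi (NCSplit p q) Lam (y#ys) = ind (inXm (Suc (length ys)) 1 (y # ys)) * oint 0 y (\<lambda>x. a_pi p G (x#y#ys))
           + oint y 1 (\<lambda>x. a_pi p G (x#y#ys))" by (simp add: G_def)
        then show ?thesis using GF0 Cons by (simp add: Lam_def oint_zero)
      qed
    qed
  next
    show "\<forall>n g. 1 \<le> n \<longrightarrow> g \<in> Dn n \<longrightarrow>
         (\<forall>xs. length xs = n \<longrightarrow>
            a_pi (NCSplit p q) g xs =
              (complex_of_real (P_pi (NCSplit p q) (hd xs)) * ind (inXm n 1 xs)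
               + complex_of_real (Q_pi (NCSplit p q) (hd xs)) * (ind (inX n xs) - ind (inXm n 1 xs))) * g xs)
       \<and> (\<forall>xs. length xs \<noteq> n \<longrightarrow> a_pi (NCSplit p q) g xs = 0)"
    proof (intro allI impI, rule conjI)
    fix n g assume n: "1 \<le> n" and g: "g \<in> Dn n"
    define h where "h = a_pi q g"
    have hn: "\<And>xs. length xs = n \<Longrightarrow> h xs = (complex_of_real (poly A' (hd xs)) * ind (inXm n 1 xs)
               + complex_of_real (poly B' (hd xs)) * (ind (inX n xs) - ind (inXm n 1 xs))) * g xs"
      using IHq n g unfolding h_def AB' by blast
    have h0: "\<And>xs. length xs \<noteq> n \<Longrightarrow> h xs = 0" using IHq n g unfolding h_def by blast
    have hD: "h \<in> Dn n" by (rule D1[OF g n hn h0])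
    define G where "G = cre h"
    have GD: "G \<in> Dn (Suc n)" unfolding G_def by (rule D2[OF hD n])
    define F where "F = a_pi p G"
    have Fn: "\<And>xs. length xs = Suc n \<Longrightarrow> F xs = (complex_of_real (poly A (hd xs)) * ind (inXm (Suc n) 1 xs)
               + complex_of_real (poly B (hd xs)) * (ind (inX (Suc n) xs) - ind (inXm (Suc n) 1 xs))) * G xs"
      using IHp n GD unfolding F_def AB by (metis le_SucI)
    have F0: "\<And>xs. length xs \<noteq> Suc n \<Longrightarrow> F xs = 0" using IHp n GD unfolding F_def
      by (metis le_SucI)
    have eq: "a_pi (NCSplit p q) g = ann F" unfolding F_def G_def h_def by simp
    show "\<forall>xs. length xs \<noteq> n \<longrightarrow> a_pi (NCSplit p q) g xs = 0"
    proof (intro allI impI)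
      fix xs :: "real list" assume l: "length xs \<noteq> n"
      show "a_pi (NCSplit p q) g xs = 0"
      proof (cases xs)
        case Nil
        then show ?thesis using F0 n unfolding eq by (simp add: oint_zero)
      next
        case (Cons y ys)
        then show ?thesis using F0 l unfolding eq by (simp add: oint_zero)
      qed
    qed
    show "\<forall>xs. length xs = n \<longrightarrow> a_pi (NCSplit p q) g xs =
              (complex_of_real (P_pi (NCSplit p q) (hd xs)) * ind (inXm n 1 xs)
               + complex_of_real (Q_pi (NCSplit p q) (hd xs)) * (ind (inX n xs) - ind (inXm n 1 xs))) * g xs"
    proof (intro allI impI)
      fix xs :: "real list" assume l: "length xs = n"
      then obtain y ys where xs: "xs = y # ys" using n by (cases xs) auto
      have Fx: "F (x # y # ys) = (complex_of_real (poly A x) * ind (inXm (Suc n) 1 (x#y#ys))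
               + complex_of_real (poly B x) * (ind (inX (Suc n) (x#y#ys)) - ind (inXm (Suc n) 1 (x#y#ys))))
               * (ind (0 \<le> x \<and> x \<le> 1) * ind (inX (Suc n) (x#y#ys)) * h (y#ys))" for x
        using Fn[of "x#y#ys"] l xs unfolding G_def by simp
      show "a_pi (NCSplit p q) g xs =
              (complex_of_real (P_pi (NCSplit p q) (hd xs)) * ind (inXm n 1 xs)
               + complex_of_real (Q_pi (NCSplit p q) (hd xs)) * (ind (inX n xs) - ind (inXm n 1 xs))) * g xs"
      proof (cases "g xs = 0")
        case True
        then have "h (y#ys) = 0" using hn l xs by simp
        then have "F (x # y # ys) = 0" for x using Fx by simp
        then show ?thesis using True xs unfolding eq by (simp add: oint_zero)
      next
        case False
        then have gi: "inX n xs" "\<forall>x\<in>set xs. 0 \<le> x \<and> x \<le> 1" using g unfolding Dn_def by auto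
        then have y01: "0 \<le> y" "y \<le> 1" using xs by auto
        show ?thesis
        proof (cases "inXm n 1 xs")
          case True
          have hy: "h (y#ys) = complex_of_real (poly A' y) * g xs" using hn[OF l] True gi xs by (simp add: ind_def)
          have i1: "oint 0 y (\<lambda>x. F (x # y # ys)) = oint 0 y (\<lambda>x. complex_of_real (poly A x) * h (y#ys))"
          proof (rule oint_cong)
            fix x assume x: "0 < x" "x < y"
            have "inXm (Suc n) 1 (x#y#ys)" using inXm_ext1 True xs x l by simp
            then show "F (x # y # ys) = complex_of_real (poly A x) * h (y#ys)"
              using Fx[of x] x y01 inXm_inX by (simp add: ind_def)
          qed (use y01 in auto)
          have i2: "oint y 1 (\<lambda>x. F (x # y # ys)) = oint y 1 (\<lambda>x. complex_of_real (poly B x) * h (y#ys))"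
          proof (rule oint_cong)
            fix x assume x: "y < x" "x < 1"
            have "inXm (Suc n) (Suc 1) (x#y#ys)" using inXm_extm[of n 1 y ys x] True xs x l by simp
            moreover have "\<not> inXm (Suc n) 1 (x#y#ys)" using not_inXm1 x by blast
            ultimately show "F (x # y # ys) = complex_of_real (poly B x) * h (y#ys)"
              using Fx[of x] x y01 inXm_inX by (simp add: ind_def)
          qed (use y01 in auto)
          have e: "a_pi (NCSplit p q) g xs = ind (inXm n 1 xs) * oint 0 y (\<lambda>x. F (x#y#ys)) + oint y 1 (\<lambda>x. F (x#y#ys))"
            using xs l unfolding eq by simp
          show ?thesis unfolding e i1 i2 oint_poly_c using True gi xs
            by (simp add: oint_poly AB AB' hy ind_def algebra_simps)
        next
          case False
          then obtain m where m: "inXm n m xs" using gi unfolding inX_def by blast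
          have hy: "h (y#ys) = complex_of_real (poly B' y) * g xs" using hn[OF l] False gi xs by (simp add: ind_def)
          have i2: "oint y 1 (\<lambda>x. F (x # y # ys)) = oint y 1 (\<lambda>x. complex_of_real (poly B x) * h (y#ys))"
          proof (rule oint_cong)
            fix x assume x: "y < x" "x < 1"
            have "inXm (Suc n) (Suc m) (x#y#ys)" using inXm_extm[of n m y ys x] m xs x l by simp
            moreover have "\<not> inXm (Suc n) 1 (x#y#ys)" using not_inXm1 x by blast
            ultimately show "F (x # y # ys) = complex_of_real (poly B x) * h (y#ys)"
              using Fx[of x] x y01 inXm_inX by (simp add: ind_def)
          qed (use y01 in auto)
          have e: "a_pi (NCSplit p q) g xs = ind (inXm n 1 xs) * oint 0 y (\<lambda>x. F (x#y#ys)) + oint y 1 (\<lambda>x. F (x#y#ys))"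
            using xs l unfolding eq by simp
          show ?thesis unfolding e i2 oint_poly_c using False gi xs
            by (simp add: oint_poly AB AB' hy ind_def algebra_simps)
        qed
      qed
    qed
  qed
qed
qed

end
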